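(* Let $k>1$, $F=F(a_1,\dots,a_k)$, let $0<\lambda<1/3$ and let $\tau$ be a nontrivial relabeling automorphism of $F$. Let $S'(\lambda,\tau)$ be the set of all cyclically reduced words $x$ such that $x$ and some cyclic permutation of $\tau(x^{-1})$ have a common initial segment of length $\ge\lambda|x|$. Then $S'(\lambda,\tau)$ is exponentially $CR$-negligible.
   Context: $A_{2k}=\{a_1^{\pm1},\dots,a_k^{\pm1}\}$; $F$ is identified with the set of freely reduced words over $A_{2k}$, and $CR\subseteq F$ is the set of cyclically reduced words. An automorphism $\tau$ of $F$ is a relabeling automorphism if its restriction to $A_{2k}$ is a permutation of $A_{2k}$. For $S\subseteq F$, $\rho(n,S)$ is the number of $x\in S$ with $|x|\le n$. For $S\subseteq Q\subseteq F$, $S$ is exponentially $Q$-generic if there are $C>0$ and $0<\sigma<1$ with $|\rho(n,S)/\rho(n,Q)-1|\le C\sigma^n$ for all $n$; $S$ is exponentially $Q$-negligible if $Q\setminus S$ is exponentially $Q$-generic. *)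

theory Defs
  imports Complex_Main
begin

text \<open>Alphabet A_{2k}: the letter a_i is encoded as the integer i, and a_i^{-1} as -i
  (1 \<le> i \<le> k). Formal inversion of a letter is integer negation.\<close>

definition alph :: "nat \<Rightarrow> int set" where
  "alph k = {i. i \<noteq> 0 \<and> \<bar>i\<bar> \<le> int k}"

definition freely_reduced :: "int list \<Rightarrow> bool" where
  "freely_reduced w \<longleftrightarrow> (\<forall>i. Suc i < length w \<longrightarrow> w ! Suc i \<noteq> - (w ! i))"

definition FG :: "nat \<Rightarrow> int list set" where
  "FG k = {w. set w \<subseteq> alph k \<and> freely_reduced w}"

definition CR :: "nat \<Rightarrow> int list set" where
  "CR k = {w \<in> FG k. w = [] \<or> last w \<noteq> - hd w}"

fun red :: "int list \<Rightarrow> int list" where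
  "red [] = []"
| "red (a # w) = (case red w of [] \<Rightarrow> [a] | b # v \<Rightarrow> if b = - a then v else a # b # v)"

definition fmult :: "int list \<Rightarrow> int list \<Rightarrow> int list" where
  "fmult x y = red (x @ y)"

definition finv :: "int list \<Rightarrow> int list" where
  "finv x = rev (map uminus x)"

definition group_aut :: "nat \<Rightarrow> (int list \<Rightarrow> int list) \<Rightarrow> bool" where
  "group_aut k \<tau> \<longleftrightarrow> bij_betw \<tau> (FG k) (FG k) \<and>
     (\<forall>x\<in>FG k. \<forall>y\<in>FG k. \<tau> (fmult x y) = fmult (\<tau> x) (\<tau> y))"

definition relabeling_aut :: "nat \<Rightarrow> (int list \<Rightarrow> int list) \<Rightarrow> bool" where
  "relabeling_aut k \<tau> \<longleftrightarrow> group_aut k \<tau> \<and>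
     (\<exists>\<pi>. bij_betw \<pi> (alph k) (alph k) \<and> (\<forall>a\<in>alph k. \<tau> [a] = [\<pi> a]))"

definition rho :: "nat \<Rightarrow> int list set \<Rightarrow> real" where
  "rho n S = real (card {x\<in>S. length x \<le> n})"

definition exp_generic :: "int list set \<Rightarrow> int list set \<Rightarrow> bool" where
  "exp_generic S Q \<longleftrightarrow> S \<subseteq> Q \<and>
     (\<exists>C::real. \<exists>\<sigma>::real. C > 0 \<and> 0 < \<sigma> \<and> \<sigma> < 1 \<and>
        (\<forall>n. \<bar>rho n S / rho n Q - 1\<bar> \<le> C * \<sigma> ^ n))"

definition exp_negligible :: "int list set \<Rightarrow> int list set \<Rightarrow> bool" where
  "exp_negligible S Q \<longleftrightarrow> S \<subseteq> Q \<and> exp_generic (Q - S) Q"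

definition Sprime :: "nat \<Rightarrow> real \<Rightarrow> (int list \<Rightarrow> int list) \<Rightarrow> int list set" where
  "Sprime k lam \<tau> = {x \<in> CR k. \<exists>j m. real m \<ge> lam * real (length x) \<and>
      m \<le> length x \<and> take m x = take m (rotate j (\<tau> (finv x)))}"

end

theory Submission
  imports Defs
begin
lemma fr_Cons: "freely_reduced (a # w) \<longleftrightarrow> freely_reduced w \<and> (w \<noteq> [] \<longrightarrow> hd w \<noteq> - a)"
  unfolding freely_reduced_def
  apply (cases w)
   apply simp
  apply (auto simp: nth_Cons split: nat.splits)
  done
lemma fr_Nil[simp]: "freely_reduced []" by (simp add: freely_reduced_def)
lemma fr_snoc: "freely_reduced (u @ [c]) \<longleftrightarrow> freely_reduced u \<and> (u \<noteq> [] \<longrightarrow> c \<noteq> - last u)"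
  by (induction u) (auto simp: fr_Cons)
lemma alph_neg: "a \<in> alph k \<Longrightarrow> - a \<in> alph k" by (simp add: alph_def)

lemma alph_eq: "alph k = {1..int k} \<union> {- int k..-1}"
  by (auto simp: alph_def)
lemma finite_alph[simp]: "finite (alph k)" by (simp add: alph_eq)
lemma card_alph: "card (alph k) = 2 * k"
proof -
  have "card ({1..int k} \<union> {- int k..-1}) = card {1..int k} + card {- int k..-1}"
    by (rule card_Un_disjoint) auto
  then show ?thesis by (simp add: alph_eq)
qed

lemma finite_FG_len: "finite {x\<in>FG k. length x \<le> n}"
proof -
  have "{x\<in>FG k. length x \<le> n} \<subseteq> {x. set x \<subseteq> alph k \<and> length x \<le> n}" by (auto simp: FG_def)
  moreover have "finite {x. set x \<subseteq> alph k \<and> length x \<le> n}"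
    by (rule finite_lists_length_le) simp
  ultimately show ?thesis by (rule finite_subset)
qed

lemma count_det:
  fixes X :: "int list set" and D :: "nat set"
  assumes k: "k \<ge> 1" and X: "X \<subseteq> {x\<in>FG k. length x = n}" and D: "D \<subseteq> {..<n}"
    and det: "\<forall>t\<in>D. \<exists>f. \<forall>x\<in>X. x!t = f (take t x)"
  shows "card X * (2*k-1)^card D \<le> 2 * (2*k-1)^n"
proof (cases "X = {}")
  case True then show ?thesis by simp
next
  case False
  then have "X \<noteq> {}" .
  define q where "q = 2*k-1"
  have q1: "q \<ge> 1" using k by (simp add: q_def)
  have finX: "finite X"
    by (rule finite_subset[OF _ finite_FG_len[of k n]]) (use X in auto)
  define P where "P t = take t ` X" for t
  have finP: "finite (P t)" for t using finX by (simp add: P_def)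
  have claim: "t \<le> n \<Longrightarrow> card (P t) * q ^ card (D \<inter> {..<t}) \<le> 2 * q ^ t" for t
  proof (induction t)
    case 0
    have "P 0 \<subseteq> {[]}" by (auto simp: P_def)
    then have "card (P 0) \<le> 1" using card_mono[of "{[]}" "P 0"] by simp
    then show ?case by simp
  next
    case (Suc t)
    then have tn: "t < n" by simp
    have IH: "card (P t) * q ^ card (D \<inter> {..<t}) \<le> 2 * q ^ t" using Suc by simp
    have tk: "take (Suc t) x = take t x @ [x ! t]" if "x \<in> X" for x
      using that X tn by (auto simp: take_Suc_conv_app_nth)
    show ?case
    proof (cases "t \<in> D")
      case True
      have eqD: "D \<inter> {..<Suc t} = insert t (D \<inter> {..<t})" using True by auto
      have cD: "card (D \<inter> {..<Suc t}) = Suc (card (D \<inter> {..<t}))"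
        unfolding eqD by (rule card_insert_disjoint) auto
      obtain f where f: "\<forall>x\<in>X. x!t = f (take t x)" using det True by blast
      have "P (Suc t) \<subseteq> (\<lambda>u. u @ [f u]) ` P t"
        using tk f by (auto simp: P_def)
      then have "card (P (Suc t)) \<le> card (P t)"
        by (meson card_image_le card_mono finP finite_imageI le_trans)
      then have "card (P (Suc t)) * q ^ card (D \<inter> {..<Suc t}) \<le> card (P t) * q ^ card (D \<inter> {..<t}) * q"
        unfolding cD by simp
      also have "\<dots> \<le> 2 * q ^ t * q" using IH by simp
      finally show ?thesis by (simp add: mult.commute)
    next
      case False
      have eqD: "D \<inter> {..<Suc t} = D \<inter> {..<t}" using False by (auto simp: less_Suc_eq)
      show ?thesis
      proof (cases t)
        case 0
        have "P (Suc t) \<subseteq> (\<lambda>c. [c]) ` alph k"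
        proof
          fix v assume "v \<in> P (Suc t)"
          then obtain x where x: "x \<in> X" "v = take (Suc t) x" by (auto simp: P_def)
          have "x ! 0 \<in> set x" using x X tn by (auto intro!: nth_mem)
          then have "x!0 \<in> alph k" using x X by (auto simp: FG_def)
          then show "v \<in> (\<lambda>c. [c]) ` alph k" using tk[OF x(1)] x 0 by auto
        qed
        then have "card (P (Suc t)) \<le> 2 * k"
          by (metis card_alph card_image_le card_mono finite_alph finite_imageI le_trans)
        also have "\<dots> \<le> 2 * q" using k by (simp add: q_def)
        finally have "card (P (Suc t)) \<le> 2 * q" .
        moreover have "D \<inter> {..<Suc t} = {}" using eqD 0 by simp
        ultimately show ?thesis using 0 by simp
      next
        case (Suc s)
        have "P (Suc t) \<subseteq> (\<Union>u\<in>P t. (\<lambda>c. u @ [c]) ` (alph k - {- last u}))"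
        proof
          fix v assume "v \<in> P (Suc t)"
          then obtain x where x: "x \<in> X" "v = take (Suc t) x" by (auto simp: P_def)
          have xF: "set x \<subseteq> alph k" "freely_reduced x" "length x = n" using x X by (auto simp: FG_def)
          have a1: "x ! t \<in> alph k" using xF tn by auto
          have a2: "last (take t x) = x ! s" using Suc tn xF by (simp add: take_Suc_conv_app_nth)
          have a3: "x ! t \<noteq> - (x ! s)" using xF tn Suc by (auto simp: freely_reduced_def)
          have a4: "take t x \<in> P t" using x by (simp add: P_def)
          have a5: "v = take t x @ [x ! t]" using x tk by simp
          show "v \<in> (\<Union>u\<in>P t. (\<lambda>c. u @ [c]) ` (alph k - {- last u}))"
            unfolding a5 by (rule UN_I[OF a4], rule imageI) (use a1 a2 a3 in simp)
        qed
        moreover have "card (\<Union>u\<in>P t. (\<lambda>c. u @ [c]) ` (alph k - {- last u})) \<le> card (P t) * q"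
        proof -
          have "card (\<Union>u\<in>P t. (\<lambda>c. u @ [c]) ` (alph k - {- last u})) \<le> (\<Sum>u\<in>P t. card ((\<lambda>c. u @ [c]) ` (alph k - {- last u})))"
            by (rule card_UN_le) (rule finP)
          also have "\<dots> \<le> (\<Sum>u\<in>P t. q)"
          proof (rule sum_mono)
            fix u assume u: "u \<in> P t"
            then obtain x where x: "x \<in> X" "u = take t x" by (auto simp: P_def)
            have xF: "set x \<subseteq> alph k" "length x = n" using x X by (auto simp: FG_def)
            have "last u = x ! s" using Suc tn xF x by (simp add: take_Suc_conv_app_nth)
            then have "last u \<in> alph k" using xF tn Suc by auto
            then have "- last u \<in> alph k" by (rule alph_neg)
            then have "card (alph k - {- last u}) = q" by (simp add: card_alph q_def)
            then show "card ((\<lambda>c. u @ [c]) ` (alph k - {- last u})) \<le> q"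
              by (metis card_image_le finite_Diff finite_alph)
          qed
          finally show ?thesis by simp
        qed
        ultimately have "card (P (Suc t)) \<le> card (P t) * q"
          by (meson card_mono finite_UN_I finite_Diff finite_alph finite_imageI finP le_trans)
      then have "card (P (Suc t)) * q ^ card (D \<inter> {..<Suc t}) \<le> card (P t) * q ^ card (D \<inter> {..<t}) * q"
        unfolding eqD by simp
      also have "\<dots> \<le> 2 * q ^ t * q" using IH by simp
      finally show ?thesis by (simp add: mult.commute)
    qed
    qed
  qed
  have "P n = X" using X by (force simp: P_def)
  moreover have "D \<inter> {..<n} = D" using D by auto
  ultimately show ?thesis using claim[of n] by (simp add: q_def)
qed

lemma lower_R:
  assumes k: "k \<ge> 2"
  shows "card {w \<in> FG k. length w = Suc t \<and> hd w = 1} \<ge> (2*k-1)^t"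
proof (induction t)
  case 0
  have "[1] \<in> {w \<in> FG k. length w = Suc 0 \<and> hd w = 1}"
    using k by (auto simp: FG_def alph_def freely_reduced_def)
  moreover have "finite {w \<in> FG k. length w = Suc 0 \<and> hd w = 1}"
    by (rule finite_subset[OF _ finite_FG_len[of k "Suc 0"]]) auto
  ultimately have "card {w \<in> FG k. length w = Suc 0 \<and> hd w = 1} > 0"
    by (subst card_gt_0_iff) (metis (mono_tags, lifting) empty_iff)
  then show ?case by simp
next
  case (Suc t)
  define R where "R = {w \<in> FG k. length w = Suc t \<and> hd w = 1}"
  define q where "q = 2*k-1"
  have finR: "finite R" unfolding R_def
    by (rule finite_subset[OF _ finite_FG_len[of k "Suc t"]]) auto
  let ?U = "\<Union>u\<in>R. (\<lambda>c. u @ [c]) ` (alph k - {- last u})"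
  have sub: "?U \<subseteq> {w \<in> FG k. length w = Suc (Suc t) \<and> hd w = 1}"
  proof
    fix v assume "v \<in> ?U"
    then obtain u c where u: "u \<in> R" and c: "c \<in> alph k" "c \<noteq> - last u" and v: "v = u @ [c]" by auto
    have "u \<in> FG k" "length u = Suc t" "hd u = 1" using u by (auto simp: R_def)
    then show "v \<in> {w \<in> FG k. length w = Suc (Suc t) \<and> hd w = 1}"
      using c v by (auto simp: FG_def fr_snoc hd_append)
  qed
  have finU: "finite {w \<in> FG k. length w = Suc (Suc t) \<and> hd w = 1}"
    by (rule finite_subset[OF _ finite_FG_len[of k "Suc (Suc t)"]]) auto
  have "card ?U = (\<Sum>u\<in>R. card ((\<lambda>c. u @ [c]) ` (alph k - {- last u})))"
    by (rule card_UN_disjoint) (auto simp: finR)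
  also have "\<dots> = (\<Sum>u\<in>R. q)"
  proof (rule sum.cong)
    fix u assume u: "u \<in> R"
    have "u \<noteq> []" "set u \<subseteq> alph k" using u by (auto simp: R_def FG_def)
    then have "last u \<in> alph k" by auto
    then have "- last u \<in> alph k" by (rule alph_neg)
    then have "card (alph k - {- last u}) = q" by (simp add: card_alph q_def)
    moreover have "inj_on (\<lambda>c. u @ [c]) (alph k - {- last u})" by (auto simp: inj_on_def)
    ultimately show "card ((\<lambda>c. u @ [c]) ` (alph k - {- last u})) = q" by (simp add: card_image)
  qed simp
  also have "\<dots> = card R * q" by simp
  finally have "card ?U = card R * q" .
  moreover have "card ?U \<le> card {w \<in> FG k. length w = Suc (Suc t) \<and> hd w = 1}"
    by (rule card_mono[OF finU sub])
  moreover have "card R \<ge> q ^ t" using Suc by (simp add: R_def q_def)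
  ultimately show ?case unfolding q_def[symmetric]
    by (metis (no_types, lifting) le_trans mult_le_mono1 power_Suc2)
qed

lemma lower_CR:
  assumes k: "k \<ge> 2" and n: "n \<ge> 2"
  shows "card {x \<in> CR k. length x = n} \<ge> (2*k-1)^(n-2)"
proof -
  define R where "R = {w \<in> FG k. length w = Suc (n-2) \<and> hd w = 1}"
  have "\<exists>c. c \<in> alph k - {- last w, -1}" for w
  proof -
    have "card (alph k - {- last w, -1}) \<ge> card (alph k) - card {- last w, -1}"
      by (rule diff_card_le_card_Diff) simp
    moreover have "card {- last w, -1::int} \<le> 2" by (simp add: card_insert_le_m1)
    ultimately have "card (alph k - {- last w, -1}) > 0" using k by (simp add: card_alph)
    then show ?thesis by (metis card_gt_0_iff ex_in_conv)
  qed
  then obtain cf where cf: "\<And>w. cf w \<in> alph k - {- last w, -1}" by metis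
  define g where "g w = w @ [cf w]" for w
  have "g ` R \<subseteq> {x \<in> CR k. length x = n}"
  proof
    fix v assume "v \<in> g ` R"
    then obtain w where w: "w \<in> R" "v = w @ [cf w]" by (auto simp: g_def)
    have "w \<in> FG k" "length w = n - 1" "hd w = 1" using w n by (auto simp: R_def)
    moreover have "w \<noteq> []" using w by (auto simp: R_def)
    ultimately show "v \<in> {x \<in> CR k. length x = n}"
      using cf[of w] w n by (auto simp: CR_def FG_def fr_snoc hd_append)
  qed
  moreover have "inj_on g R" by (auto simp: inj_on_def g_def)
  moreover have "finite {x \<in> CR k. length x = n}"
    by (rule finite_subset[OF _ finite_FG_len[of k n]]) (auto simp: CR_def)
  ultimately have "card R \<le> card {x \<in> CR k. length x = n}"
    by (metis card_image card_mono)
  moreover have "card R \<ge> (2*k-1)^(n-2)" unfolding R_def by (rule lower_R[OF k])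
  ultimately show ?thesis by simp
qed

lemma r_formula:
  assumes "j < l" "i < l"
  shows "l - Suc ((i + j) mod l) = (if i + j < l then l - 1 - i - j else 2*l - 1 - i - j)"
proof (cases "i + j < l")
  case True then show ?thesis by simp
next
  case False
  then have "(i + j) mod l = i + j - l"
    using assms by (simp add: le_mod_geq)
  then show ?thesis using False assms by simp
qed

lemma X_bound:
  assumes k: "k \<ge> 1" and l: "l \<ge> 1" and j: "j < l" and m: "m \<le> l"
    and pinj: "inj_on \<pi> (alph k)"
  shows "\<exists>D::nat set. card {x \<in> FG k. length x = l \<and> (\<forall>i<m. x!i = \<pi> (-(x ! (l - Suc ((i + j) mod l)))))}
            * (2*k-1)^card D \<le> 2 * (2*k-1)^l \<and> m \<le> 2 * card D + 2"
proof -
  define r where "r i = l - Suc ((i + j) mod l)" for i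
  define X where "X = {x \<in> FG k. length x = l \<and> (\<forall>i<m. x!i = \<pi> (-(x ! r i)))}"
  have rf: "i < l \<Longrightarrow> r i = (if i + j < l then l - 1 - i - j else 2*l - 1 - i - j)" for i
    unfolding r_def using r_formula[OF j] by blast
  have rl: "i < l \<Longrightarrow> r i < l" for i using rf[of i] by auto
  have rr: "i < l \<Longrightarrow> r (r i) = i" for i
  proof -
    assume i: "i < l"
    show "r (r i) = i"
    proof (cases "i + j < l")
      case True
      then have "r i = l - 1 - i - j" using rf i by simp
      then show ?thesis using rf[of "r i"] rl[OF i] True by simp
    next
      case False
      then have "r i = 2*l - 1 - i - j" using rf i by simp
      moreover have "\<not> (r i + j < l)" using calculation i j by linarith
      ultimately show ?thesis using rf[of "r i"] rl[OF i] False i j by simp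
    qed
  qed
  define D1 where "D1 = {t. t < m \<and> r t < t}"
  define A where "A = {i. i < m \<and> i < r i}"
  define D2 where "D2 = {t. t < l \<and> r t < m \<and> r t < t}"
  define D where "D = D1 \<union> D2"
  have finD1: "finite D1" by (auto simp: D1_def)
  have finA: "finite A" by (auto simp: A_def)
  have finD2: "finite D2" by (auto simp: D2_def)
  have finD: "finite D" using finD1 finD2 by (simp add: D_def)
  have D2eq: "D2 = r ` A"
  proof
    show "D2 \<subseteq> r ` A"
    proof
      fix t assume t: "t \<in> D2"
      then have t': "t < l" "r t < m" "r t < t" by (simp_all add: D2_def)
      have e: "r (r t) = t" using rr[OF t'(1)] .
      have "r t \<in> A" unfolding A_def using t' e by simp
      then show "t \<in> r ` A" using e by (metis image_eqI)
    qed
    show "r ` A \<subseteq> D2"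
    proof
      fix t assume "t \<in> r ` A"
      then obtain i where i: "i \<in> A" "t = r i" by blast
      then have i': "i < m" "i < r i" by (simp_all add: A_def)
      then have il: "i < l" using m by simp
      have e: "r (r i) = i" using rr[OF il] .
      show "t \<in> D2" unfolding D2_def using i' e rl[OF il] i(2) by simp
    qed
  qed
  have "inj_on r A"
  proof (rule inj_onI)
    fix a b assume "a \<in> A" "b \<in> A" "r a = r b"
    then have "a < l" "b < l" "r a = r b" using m by (auto simp: A_def)
    then show "a = b" using rr by metis
  qed
  then have cD2: "card D2 = card A" using D2eq by (simp add: card_image)
  have fixs: "{i. i < l \<and> r i = i} \<subseteq> {(l-1-j) div 2, (2*l-1-j) div 2}"
  proof
    fix i assume "i \<in> {i. i < l \<and> r i = i}"
    then have i: "i < l" "r i = i" by auto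
    show "i \<in> {(l-1-j) div 2, (2*l-1-j) div 2}"
    proof (cases "i + j < l")
      case True
      then have "l - 1 - i - j = i" using rf i by simp
      then have "l-1-j = 2*i" by arith
      then have "i = (l-1-j) div 2" by simp
      then show ?thesis by simp
    next
      case False
      then have "2*l - 1 - i - j = i" using rf i by simp
      then have "2*l-1-j = 2*i" by arith
      then have "i = (2*l-1-j) div 2" by simp
      then show ?thesis by simp
    qed
  qed
  have cfix: "card {i. i < l \<and> r i = i} \<le> 2"
    by (rule order_trans[OF card_mono[OF _ fixs]]) (auto simp: card_insert_le_m1)
  have "{..<m} \<subseteq> D1 \<union> A \<union> {i. i < l \<and> r i = i}"
    using m by (auto simp: D1_def A_def)
  then have "m \<le> card (D1 \<union> A \<union> {i. i < l \<and> r i = i})"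
    using card_mono[of "D1 \<union> A \<union> {i. i < l \<and> r i = i}" "{..<m}"] finD1 finA by simp
  also have "\<dots> \<le> card D1 + card A + card {i. i < l \<and> r i = i}"
    using card_Un_le[of "D1 \<union> A" "{i. i < l \<and> r i = i}"] card_Un_le[of D1 A] by linarith
  also have "\<dots> \<le> card D + card D + 2"
  proof -
    have "card D1 \<le> card D" using finD by (auto simp: D_def intro: card_mono)
    moreover have "card A \<le> card D" using card_mono[OF finD, of D2] cD2 by (simp add: D_def)
    ultimately show ?thesis using cfix by linarith
  qed
  finally have mD: "m \<le> 2 * card D + 2" by simp
  have Dsub: "D \<subseteq> {..<l}" using m by (auto simp: D_def D1_def D2_def)
  have det: "\<forall>t\<in>D. \<exists>f. \<forall>x\<in>X. x!t = f (take t x)"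
  proof
    fix t assume t: "t \<in> D"
    show "\<exists>f. \<forall>x\<in>X. x!t = f (take t x)"
    proof (cases "t < m \<and> r t < t")
      case True
      show ?thesis
      proof (intro exI ballI)
        fix x assume "x \<in> X"
        then have "x ! t = \<pi> (-(x ! r t))" using True by (auto simp: X_def)
        then show "x ! t = \<pi> (- (take t x ! r t))" using True by simp
      qed
    next
      case False
      then have t2: "t < l" "r t < m" "r t < t" using t by (auto simp: D_def D1_def D2_def)
      show ?thesis
      proof (intro exI ballI)
        fix x assume x: "x \<in> X"
        then have "x ! r t = \<pi> (-(x ! r (r t)))" using t2 by (auto simp: X_def)
        then have e: "x ! r t = \<pi> (-(x ! t))" using rr t2 by simp
        have "x ! t \<in> alph k" using x t2 by (auto simp: X_def FG_def)
        then have "- (x ! t) \<in> alph k" by (rule alph_neg)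
        then have "inv_into (alph k) \<pi> (x ! r t) = - (x ! t)" using e pinj by (simp add: inv_into_f_f)
        then show "x ! t = - inv_into (alph k) \<pi> (take t x ! r t)" using t2 by simp
      qed
    qed
  qed
  have cX: "card X * (2*k-1)^card D \<le> 2 * (2*k-1)^l"
    by (rule count_det[OF k _ Dsub det]) (auto simp: X_def)
  have eqX: "X = {x \<in> FG k. length x = l \<and> (\<forall>i<m. x!i = \<pi> (-(x ! (l - Suc ((i + j) mod l)))))}"
    by (simp add: X_def r_def)
  show ?thesis using cX mD unfolding eqX by blast
qed
lemma red_reduced: "freely_reduced w \<Longrightarrow> red w = w"
  by (induction w) (auto simp: fr_Cons split: list.splits)

lemma fr_map:
  assumes "set w \<subseteq> alph k" "freely_reduced w" "inj_on \<pi> (alph k)"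
    "\<forall>a\<in>alph k. \<pi> (-a) = - \<pi> a"
  shows "freely_reduced (map \<pi> w)"
  using assms(1,2)
proof (induction w)
  case Nil then show ?case by simp
next
  case (Cons a w)
  then have "freely_reduced (map \<pi> w)" by (simp add: fr_Cons)
  moreover have "hd (map \<pi> w) \<noteq> - \<pi> a" if "w \<noteq> []"
  proof
    assume h: "hd (map \<pi> w) = - \<pi> a"
    have "hd w \<in> alph k" using Cons.prems that by (cases w) auto
    moreover have "a \<in> alph k" using Cons.prems by auto
    ultimately have "\<pi> (hd w) = \<pi> (-a)" using h assms(4) that by (cases w) auto
    then have "hd w = -a" using assms(3) \<open>hd w \<in> alph k\<close> \<open>a \<in> alph k\<close> alph_neg
      by (metis inj_on_def)
    then show False using Cons.prems that by (simp add: fr_Cons)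
  qed
  ultimately show ?case by (simp add: fr_Cons)
qed

lemma tau_map:
  assumes "relabeling_aut k \<tau>"
  obtains \<pi> where "bij_betw \<pi> (alph k) (alph k)" "\<forall>a\<in>alph k. \<pi> (-a) = - \<pi> a"
    "\<forall>x\<in>FG k. \<tau> x = map \<pi> x"
proof -
  from assms obtain \<pi> where bij: "bij_betw \<tau> (FG k) (FG k)"
    and hom: "\<forall>x\<in>FG k. \<forall>y\<in>FG k. \<tau> (fmult x y) = fmult (\<tau> x) (\<tau> y)"
    and pb: "bij_betw \<pi> (alph k) (alph k)" and pa: "\<forall>a\<in>alph k. \<tau> [a] = [\<pi> a]"
    unfolding relabeling_aut_def group_aut_def by blast
  have FGfr: "x \<in> FG k \<Longrightarrow> freely_reduced x" for x by (simp add: FG_def)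
  have nilFG: "[] \<in> FG k" by (simp add: FG_def)
  then have "[] \<in> \<tau> ` FG k" using bij by (simp add: bij_betw_def)
  then obtain y where y: "y \<in> FG k" "\<tau> y = []" by auto
  have t0: "\<tau> (fmult [] y) = fmult (\<tau> []) (\<tau> y)" using hom y nilFG by blast
  have "fmult [] y = y" using y FGfr by (simp add: fmult_def red_reduced)
  moreover have "\<tau> [] \<in> FG k" using bij nilFG by (meson bij_betwE)
  ultimately have tnil: "\<tau> [] = []" using t0 y FGfr by (simp add: fmult_def red_reduced)
  have inj: "inj_on \<pi> (alph k)" using pb bij_betw_def by blast
  have neg: "\<forall>a\<in>alph k. \<pi> (-a) = - \<pi> a"
  proof
    fix a assume a: "a \<in> alph k"
    then have "-a \<in> alph k" by (rule alph_neg)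
    have "[a] \<in> FG k" "[-a] \<in> FG k" using a \<open>-a \<in> alph k\<close> by (auto simp: FG_def freely_reduced_def)
    then have "\<tau> (fmult [a] [-a]) = fmult [\<pi> a] [\<pi> (-a)]" using hom pa a \<open>-a \<in> alph k\<close> by metis
    moreover have "fmult [a] [-a] = []" by (simp add: fmult_def)
    ultimately have "red [\<pi> a, \<pi> (-a)] = []" using tnil by (simp add: fmult_def)
    then show "\<pi> (-a) = - \<pi> a" by (simp split: if_splits)
  qed
  have "\<forall>x\<in>FG k. \<tau> x = map \<pi> x"
  proof
    fix x assume "x \<in> FG k"
    then show "\<tau> x = map \<pi> x"
    proof (induction x)
      case Nil then show ?case using tnil by simp
    next
      case (Cons a w)
      then have a: "a \<in> alph k" and w: "w \<in> FG k" and fr: "freely_reduced (a # w)"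
        by (auto simp: FG_def fr_Cons)
      have "[a] \<in> FG k" using a by (auto simp: FG_def freely_reduced_def)
      have "fmult [a] w = a # w" using fr by (metis append_Cons append_Nil fmult_def red_reduced)
      then have "\<tau> (a # w) = fmult [\<pi> a] (map \<pi> w)"
        using hom \<open>[a] \<in> FG k\<close> w pa a Cons.IH by metis
      also have "\<dots> = \<pi> a # map \<pi> w"
      proof -
        have "set (a # w) \<subseteq> alph k" using Cons.prems by (simp add: FG_def)
        then have "freely_reduced (map \<pi> (a # w))" using fr_map[OF _ fr inj neg] by blast
        then show ?thesis by (metis append_Cons append_Nil fmult_def red_reduced list.simps(9))
      qed
      finally show ?case by simp
    qed
  qed
  then show ?thesis using that pb neg by blast
qed

lemma fr_finv: "freely_reduced x \<Longrightarrow> freely_reduced (finv x)"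
proof (induction x)
  case Nil then show ?case by (simp add: finv_def)
next
  case (Cons a x)
  have e: "finv (a # x) = finv x @ [-a]" by (simp add: finv_def)
  have lf: "x \<noteq> [] \<Longrightarrow> last (finv x) = - hd x" by (simp add: finv_def last_rev hd_map)
  have fx: "freely_reduced x" and hx: "x \<noteq> [] \<Longrightarrow> hd x \<noteq> - a" using Cons.prems by (auto simp: fr_Cons)
  have ne: "finv x \<noteq> [] \<longleftrightarrow> x \<noteq> []" by (simp add: finv_def)
  have "freely_reduced (finv x)" using Cons.IH fx by simp
  moreover have "finv x \<noteq> [] \<longrightarrow> - a \<noteq> - last (finv x)"
  proof
    assume "finv x \<noteq> []"
    then have "x \<noteq> []" using ne by simp
    then show "- a \<noteq> - last (finv x)" using lf hx by auto
  qed
  ultimately show ?case unfolding e fr_snoc by blast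
qed

lemma finv_FG: "x \<in> FG k \<Longrightarrow> finv x \<in> FG k"
  using fr_finv by (auto simp: FG_def finv_def alph_def)

lemma Sl_bound:
  assumes k: "k \<ge> 2" and lam: "0 < lam" "lam < 1" and pb: "bij_betw \<pi> (alph k) (alph k)"
    and tm: "\<forall>x\<in>FG k. \<tau> x = map \<pi> x" and l: "l \<ge> 1"
  shows "real (card {x \<in> Sprime k lam \<tau>. length x = l})
     \<le> real l * (2 * real (2*k-1)^l / real (2*k-1) powr ((lam*l-2)/2))"
proof -
  define q where "q = 2*k-1"
  have q3: "q \<ge> 3" using k by (simp add: q_def)
  define m0 where "m0 = nat \<lceil>lam * l\<rceil>"
  have "lam * real l \<le> real l" using lam by (intro mult_left_le_one_le) auto
  then have m0l: "m0 \<le> l" unfolding m0_def by (simp add: nat_ceiling_le_eq)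
  have m0ge: "real m0 \<ge> lam * l" unfolding m0_def by linarith
  define X where "X j = {x \<in> FG k. length x = l \<and> (\<forall>i<m0. x!i = \<pi> (-(x ! (l - Suc ((i + j) mod l)))))}" for j
  define b where "b = 2 * real q^l / real q powr ((lam*l-2)/2)"
  have pinj: "inj_on \<pi> (alph k)" using pb by (simp add: bij_betw_def)
  have sub: "{x \<in> Sprime k lam \<tau>. length x = l} \<subseteq> (\<Union>j\<in>{..<l}. X j)"
  proof
    fix x assume "x \<in> {x \<in> Sprime k lam \<tau>. length x = l}"
    then obtain j m where x: "x \<in> CR k" "length x = l" and m: "real m \<ge> lam * real l" "m \<le> l"
      and tk: "take m x = take m (rotate j (\<tau> (finv x)))"
      unfolding Sprime_def by auto
    have xF: "x \<in> FG k" using x by (simp add: CR_def)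
    have ys: "\<tau> (finv x) = map \<pi> (finv x)" using tm finv_FG[OF xF] by blast
    have m0m: "m0 \<le> m" unfolding m0_def using m by (simp add: nat_ceiling_le_eq)
    have "x \<in> X (j mod l)"
      unfolding X_def
    proof (intro CollectI conjI allI impI)
      show "x \<in> FG k" by (rule xF)
      show "length x = l" by (rule x(2))
      fix i assume i: "i < m0"
      then have im: "i < m" and il: "i < l" using m0m m0l by auto
      have "x ! i = take m x ! i" using im by simp
      also have "\<dots> = rotate j (map \<pi> (finv x)) ! i" using tk ys im by simp
      also have "\<dots> = map \<pi> (finv x) ! ((i + j) mod l)"
        using il x(2) by (simp add: nth_rotate finv_def add.commute)
      also have "\<dots> = \<pi> (-(x ! (l - Suc ((i + j) mod l))))"
      proof -
        have s: "(i + j) mod l < l" using l by simp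
        then show ?thesis using x(2) by (simp add: finv_def rev_nth)
      qed
      also have "(i + j) mod l = (i + j mod l) mod l" by (simp add: mod_add_right_eq)
      finally show "x ! i = \<pi> (-(x ! (l - Suc ((i + j mod l) mod l))))" .
    qed
    moreover have "j mod l < l" using l by simp
    ultimately show "x \<in> (\<Union>j\<in>{..<l}. X j)" by blast
  qed
  have each: "real (card (X j)) \<le> b" if j: "j < l" for j
  proof -
    obtain D :: "nat set" where D: "card (X j) * q^card D \<le> 2 * q^l" "m0 \<le> 2 * card D + 2"
      using X_bound[OF _ l j m0l pinj] k unfolding X_def q_def by auto
    have "real (card (X j)) * real q ^ card D \<le> 2 * real q ^ l"
      using D(1) by (metis of_nat_le_iff of_nat_mult of_nat_numeral of_nat_power)
    moreover have "real q ^ card D = real q powr real (card D)" using q3 by (simp add: powr_realpow)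
    moreover have "real q powr ((lam*l-2)/2) \<le> real q powr real (card D)"
      using q3 D(2) m0ge by (intro powr_mono) auto
    moreover have "real q powr ((lam*l-2)/2) > 0" using q3 by simp
    ultimately have "real (card (X j)) * real q powr ((lam*l-2)/2) \<le> 2 * real q ^ l"
      by (smt (verit, best) mult_left_mono of_nat_0_le_iff)
    then show ?thesis unfolding b_def using q3 by (simp add: pos_le_divide_eq)
  qed
  have finX: "finite (X j)" for j
    by (rule finite_subset[OF _ finite_FG_len[of k l]]) (auto simp: X_def)
  have "card {x \<in> Sprime k lam \<tau>. length x = l} \<le> card (\<Union>j\<in>{..<l}. X j)"
    by (rule card_mono[OF _ sub]) (simp add: finX)
  also have "\<dots> \<le> (\<Sum>j<l. card (X j))" by (rule card_UN_le) simp
  finally have "real (card {x \<in> Sprime k lam \<tau>. length x = l}) \<le> (\<Sum>j<l. real (card (X j)))"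
    by (metis of_nat_le_iff of_nat_sum)
  also have "\<dots> \<le> (\<Sum>j<l. b)" by (rule sum_mono) (simp add: each)
  also have "\<dots> = real l * b" by simp
  finally show ?thesis unfolding b_def q_def by simp
qed

lemma bounded_aux:
  fixes \<epsilon> :: real
  assumes "0 < \<epsilon>" "\<epsilon> < 1"
  obtains K where "K > 0" "\<And>n. (real n + 1) * \<epsilon> ^ n \<le> K"
proof -
  have "(\<lambda>n. of_nat n * \<epsilon> ^ n) \<longlonglongrightarrow> 0" using assms by (intro powser_times_n_limit_0) simp
  moreover have "(\<lambda>n. \<epsilon> ^ n) \<longlonglongrightarrow> 0" using assms by (intro LIMSEQ_power_zero) simp
  ultimately have "(\<lambda>n. of_nat n * \<epsilon> ^ n + \<epsilon> ^ n) \<longlonglongrightarrow> 0 + 0" by (rule tendsto_add)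
  then have "Bseq (\<lambda>n. of_nat n * \<epsilon> ^ n + \<epsilon> ^ n)" by (rule convergent_imp_Bseq[OF convergentI])
  then obtain K where K: "K > 0" "\<And>n. norm (of_nat n * \<epsilon> ^ n + \<epsilon> ^ n) \<le> K" by (auto elim: BseqE)
  have "(real n + 1) * \<epsilon> ^ n \<le> K" for n
    using K(2)[of n] by (simp add: algebra_simps)
  then show ?thesis using that K(1) by blast
qed

theorem lemma4p6:
  fixes k :: nat and lam :: real and \<tau> :: "int list \<Rightarrow> int list"
  assumes "k > 1"
    and "0 < lam" and "lam < 1/3"
    and "relabeling_aut k \<tau>"
    and "\<exists>x\<in>FG k. \<tau> x \<noteq> x"
  shows "exp_negligible (Sprime k lam \<tau>) (CR k)"
proof -
  have k: "k \<ge> 2" using assms(1) by simp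
  have lam: "0 < lam" "lam < 1" using assms(2,3) by auto
  obtain \<pi> where pb: "bij_betw \<pi> (alph k) (alph k)" and tm: "\<forall>x\<in>FG k. \<tau> x = map \<pi> x"
    using tau_map[OF assms(4)] by blast
  define S where "S = Sprime k lam \<tau>"
  have SCR: "S \<subseteq> CR k" by (auto simp: S_def Sprime_def)
  define q :: real where "q = real (2*k-1)"
  have q3: "q \<ge> 3" using k by (simp add: q_def)
  define B where "B = q powr (lam/2)"
  have B1: "B > 1" unfolding B_def using q3 lam by (intro gr_one_powr) auto
  have "q powr (lam/2) \<le> q powr 1" using q3 lam by (intro powr_mono) auto
  then have Bq: "B \<le> q" unfolding B_def using q3 by simp
  define g where "g = q / B"
  have g1: "g \<ge> 1" unfolding g_def using Bq B1 by simp
  have Sl: "real (card {x \<in> S. length x = l}) \<le> 2 * q^2 * (real l + 1) * g ^ l" for l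
  proof (cases "l = 0")
    case True
    have "{x \<in> S. length x = l} \<subseteq> {[]}" using True by auto
    then have "card {x \<in> S. length x = l} \<le> card {[]::int list}" by (rule card_mono[rotated]) simp
    then have "card {x \<in> S. length x = l} \<le> 1" by simp
    moreover have "1 \<le> q^2" using q3 by (intro one_le_power) simp
    moreover have "2 * q^2 * (real l + 1) * g ^ l \<ge> 1" using True calculation(2) by simp
    ultimately show ?thesis by linarith
  next
    case False
    then have l: "l \<ge> 1" by simp
    have "real (card {x \<in> S. length x = l}) \<le> real l * (2 * q^l / q powr ((lam*l-2)/2))"
      using Sl_bound[OF k lam pb tm l] unfolding S_def q_def by simp
    also have "q powr ((lam*l-2)/2) = B ^ l / q"
    proof -
      have e: "(lam*l-2)/2 = lam/2 * l - 1" by (simp add: field_simps)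
      have "q powr ((lam*l-2)/2) = q powr (lam/2 * l) / q powr 1"
        unfolding e by (rule powr_diff)
      also have "q powr (lam/2 * l) = B ^ l"
      proof -
        have "B ^ l = B powr (real l)" using B1 by (simp add: powr_realpow)
        also have "\<dots> = q powr (lam/2 * l)" unfolding B_def by (simp add: powr_powr)
        finally show ?thesis by simp
      qed
      finally show ?thesis using q3 by simp
    qed
    also have "real l * (2 * q^l / (B ^ l / q)) = 2 * q * real l * g ^ l"
      unfolding g_def using B1 by (simp add: power_divide field_simps)
    also have "\<dots> \<le> 2 * q^2 * (real l + 1) * g ^ l"
    proof -
      have "real l + 1 \<le> q * (real l + 1)" using mult_right_mono[of 1 q "real l + 1"] q3 by simp
      then have "real l \<le> q * (real l + 1)" by linarith
      then have "q * real l \<le> q * (q * (real l + 1))" using q3 by (intro mult_left_mono) auto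
      then have "q * real l \<le> q^2 * (real l + 1)" by (simp add: power2_eq_square mult.assoc)
      then show ?thesis using g1 by (simp add: mult_right_mono)
    qed
    finally show ?thesis .
  qed
  have rhoS: "rho n S \<le> 2 * q^2 * (real n + 1)^2 * g ^ n" for n
  proof -
    have eq: "{x \<in> S. length x \<le> n} = (\<Union>l\<in>{..n}. {x \<in> S. length x = l})" by auto
    have "card {x \<in> S. length x \<le> n} \<le> (\<Sum>l\<le>n. card {x \<in> S. length x = l})"
      unfolding eq by (rule card_UN_le) simp
    then have "real (card {x \<in> S. length x \<le> n}) \<le> real (\<Sum>l\<le>n. card {x \<in> S. length x = l})"
      by (simp only: of_nat_le_iff)
    then have "rho n S \<le> (\<Sum>l\<le>n. real (card {x \<in> S. length x = l}))"
      unfolding rho_def by (simp only: of_nat_sum)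
    also have "\<dots> \<le> (\<Sum>l\<le>n. 2 * q^2 * (real n + 1) * g ^ n)"
    proof (rule sum_mono)
      fix l assume "l \<in> {..n}"
      then have ln: "l \<le> n" by simp
      have "g ^ l \<le> g ^ n" using g1 ln by (rule power_increasing[rotated])
      moreover have "real l + 1 \<le> real n + 1" using ln by simp
      ultimately have "2 * q^2 * (real l + 1) * g ^ l \<le> 2 * q^2 * (real n + 1) * g ^ n"
        using q3 g1 by (intro mult_mono) auto
      then show "real (card {x \<in> S. length x = l}) \<le> 2 * q^2 * (real n + 1) * g ^ n"
        using Sl[of l] by linarith
    qed
    also have "\<dots> = 2 * q^2 * (real n + 1)^2 * g ^ n" by (simp add: power2_eq_square)
    finally show ?thesis .
  qed
  have finCR: "finite {x \<in> CR k. length x \<le> n}" for n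
    by (rule finite_subset[OF _ finite_FG_len[of k n]]) (auto simp: CR_def)
  have rhoCR: "rho n (CR k) \<ge> q ^ n / q^2" for n
  proof (cases "n \<ge> 2")
    case True
    have "(2*k-1)^(n-2) \<le> card {x \<in> CR k. length x = n}" by (rule lower_CR[OF k True])
    also have "\<dots> \<le> card {x \<in> CR k. length x \<le> n}" by (rule card_mono[OF finCR]) auto
    finally have "real ((2*k-1)^(n-2)) \<le> real (card {x \<in> CR k. length x \<le> n})"
      by (simp only: of_nat_le_iff)
    then have "q ^ (n-2) \<le> rho n (CR k)" unfolding rho_def q_def by (simp only: of_nat_power)
    moreover have "q ^ n / q^2 = q ^ (n-2)" using True q3 by (simp add: power_diff)
    ultimately show ?thesis by simp
  next
    case False
    have "[] \<in> {x \<in> CR k. length x \<le> n}" by (simp add: CR_def FG_def)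
    then have "card {x \<in> CR k. length x \<le> n} > 0" using finCR[of n]
      by (auto simp only: card_gt_0_iff)
    then have "card {x \<in> CR k. length x \<le> n} \<ge> 1" by simp
    then have "rho n (CR k) \<ge> 1" unfolding rho_def by simp
    moreover have a: "q ^ n \<le> q^2" using False q3 by (intro power_increasing) auto
    ultimately have "q^2 \<le> rho n (CR k) * q^2" using mult_right_mono[of 1 "rho n (CR k)" "q^2"] by simp
    then have "q ^ n \<le> rho n (CR k) * q^2" using a by linarith
    then show ?thesis using q3 by (simp add: divide_le_eq)
  qed
  have rhoCRpos: "rho n (CR k) > 0" for n
  proof -
    have "q^n/q^2 > 0" using q3 by simp
    then show ?thesis using rhoCR[of n] by linarith
  qed
  define \<gamma> where "\<gamma> = 1 / B"
  define \<sigma> where "\<sigma> = sqrt \<gamma>"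
  define \<epsilon> where "\<epsilon> = sqrt \<sigma>"
  have \<gamma>: "0 < \<gamma>" "\<gamma> < 1" unfolding \<gamma>_def using B1 by auto
  have \<sigma>: "0 < \<sigma>" "\<sigma> < 1" unfolding \<sigma>_def using \<gamma> by auto
  have \<epsilon>: "0 < \<epsilon>" "\<epsilon> < 1" unfolding \<epsilon>_def using \<sigma> by auto
  obtain K where K: "K > 0" "\<And>n. (real n + 1) * \<epsilon> ^ n \<le> K" using bounded_aux[OF \<epsilon>] by blast
  have gq: "g / q = \<gamma>" unfolding g_def \<gamma>_def using q3 B1 by simp
  have key: "(real n + 1)^2 * \<gamma> ^ n \<le> K^2 * \<sigma> ^ n" for n
  proof -
    have "\<gamma> = \<epsilon>^2 * \<sigma>" unfolding \<epsilon>_def \<sigma>_def using \<gamma> by (simp add: power2_eq_square)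
    then have "(real n + 1)^2 * \<gamma> ^ n = ((real n + 1) * \<epsilon> ^ n)^2 * \<sigma> ^ n"
      by (simp add: power_mult_distrib power_mult[symmetric] mult.commute)
    also have "\<dots> \<le> K^2 * \<sigma> ^ n"
    proof -
      have "0 \<le> (real n + 1) * \<epsilon> ^ n" using \<epsilon> by simp
      then have "((real n + 1) * \<epsilon> ^ n)^2 \<le> K^2" by (rule power_mono[OF K(2)[of n]])
      then show ?thesis using \<sigma> by (simp add: mult_right_mono)
    qed
    finally show ?thesis .
  qed
  define C where "C = 2 * q^4 * K^2"
  have Cpos: "C > 0" unfolding C_def using q3 K by simp
  have bound: "\<bar>rho n (CR k - S) / rho n (CR k) - 1\<bar> \<le> C * \<sigma> ^ n" for n
  proof -
    have "{x \<in> CR k - S. length x \<le> n} = {x \<in> CR k. length x \<le> n} - {x \<in> S. length x \<le> n}" by auto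
    moreover have sb: "{x \<in> S. length x \<le> n} \<subseteq> {x \<in> CR k. length x \<le> n}" using SCR by auto
    moreover have "finite {x \<in> S. length x \<le> n}" using finCR[of n] sb by (rule finite_subset[rotated])
    moreover have "card {x \<in> S. length x \<le> n} \<le> card {x \<in> CR k. length x \<le> n}"
      using finCR[of n] sb by (rule card_mono)
    ultimately have "rho n (CR k - S) = rho n (CR k) - rho n S"
      unfolding rho_def by (simp add: card_Diff_subset of_nat_diff)
    then have "rho n (CR k - S) / rho n (CR k) - 1 = - (rho n S / rho n (CR k))"
      using rhoCRpos[of n] by (simp add: diff_divide_distrib)
    moreover have "rho n S \<ge> 0" by (simp add: rho_def)
    ultimately have "\<bar>rho n (CR k - S) / rho n (CR k) - 1\<bar> = rho n S / rho n (CR k)"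
      using rhoCRpos[of n] by simp
    also have "\<dots> \<le> (2 * q^2 * (real n + 1)^2 * g ^ n) / (q ^ n / q^2)"
      using rhoS[of n] rhoCR[of n] q3 \<open>rho n S \<ge> 0\<close> g1
      by (intro frac_le) auto
    also have "\<dots> = 2 * q^4 * ((real n + 1)^2 * (g / q) ^ n)"
      using q3 by (simp add: power_divide field_simps)
    also have "\<dots> \<le> 2 * q^4 * (K^2 * \<sigma> ^ n)"
      unfolding gq using key[of n] q3 by (intro mult_left_mono) auto
    also have "\<dots> = C * \<sigma> ^ n" unfolding C_def by simp
    finally show ?thesis .
  qed
  have "\<exists>C::real. \<exists>\<sigma>::real. C > 0 \<and> 0 < \<sigma> \<and> \<sigma> < 1 \<and>
        (\<forall>n. \<bar>rho n (CR k - S) / rho n (CR k) - 1\<bar> \<le> C * \<sigma> ^ n)"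
    using Cpos \<sigma> bound by blast
  then have "exp_generic (CR k - S) (CR k)"
    unfolding exp_generic_def by blast
  then show ?thesis unfolding exp_negligible_def S_def[symmetric] using SCR by blast
qed
end
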